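(* Let $\mathcal{C}$ be a permutation class with $p$-basis $\mathcal{B}$, let $\mathcal{M}=\{M_{\tau,top}:\tau\in\mathcal{B}\}$, and let $c_n$ be the number of permutations of size $n$ in $\mathcal{C}$. Then the permutation class $Av_{\mathfrak{S}}(\mathcal{M})$ is enumerated by the sequence $(n\cdot c_{n-1})_n$, i.e. it contains exactly $n\,c_{n-1}$ permutations of size $n$. The same holds when $M_{\tau,top}$ is replaced by $M_{\tau,bottom}$, $M_{\tau,right}$ or $M_{\tau,left}$.
   Context: A permutation $\sigma$ of $\{1,\dots,n\}$ (size $n$) is identified with its permutation matrix ($M_\sigma(i,j)=1$ iff $i=\sigma(j)$, rows numbered bottom to top). A matrix is a submatrix of another if obtained by deleting rows and/or columns; the pattern order on permutations is this order restricted to permutation matrices, and a permutation class is a set closed downward for it. The $p$-basis of $\mathcal{C}$ is the set of permutations not in $\mathcal{C}$ that are minimal for the pattern order among those not in $\mathcal{C}$. For a permutation $\tau$, $M_{\tau,top}$ (resp. $M_{\tau,bottom}$) is the matrix obtained by adding a row of $0$'s above (resp. below) the permutation matrix of $\tau$, and $M_{\tau,right}$ (resp. $M_{\tau,left}$) by adding a column of $0$'s to its right (resp. left). $Av_{\mathfrak{S}}(\mathcal{M})$ is the set of permutations with no submatrix in $\mathcal{M}$. The count $c_0$ refers to the empty permutation (so $c_0=1$ when $n=1$ is considered). *)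

theory Defs
  imports "HOL-Combinatorics.Permutations"
begin

text \<open>A 0/1 matrix is a triple (number of rows, number of columns, set of positions
  (i,j) carrying a 1), with row i (numbered from 0, bottom to top) and column j
  (numbered from 0, left to right).\<close>
type_synonym mat01 = "nat \<times> nat \<times> (nat \<times> nat) set"

type_synonym perm = "nat \<times> (nat \<Rightarrow> nat)"

definition is_perm :: "perm \<Rightarrow> bool" where
  "is_perm p \<longleftrightarrow> snd p permutes {..<fst p}"

definition perm_mat :: "perm \<Rightarrow> mat01" where
  "perm_mat p = (fst p, fst p, {(snd p j, j) | j. j < fst p})"

definition submatrix :: "mat01 \<Rightarrow> mat01 \<Rightarrow> bool" where
  "submatrix A B \<longleftrightarrow>
     (case A of (r', c', S') \<Rightarrow> case B of (r, c, S) \<Rightarrow>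
       (\<exists>f g. strict_mono_on {..<r'} f \<and> (\<forall>i<r'. f i < r) \<and>
              strict_mono_on {..<c'} g \<and> (\<forall>j<c'. g j < c) \<and>
              (\<forall>i<r'. \<forall>j<c'. ((i, j) \<in> S' \<longleftrightarrow> (f i, g j) \<in> S))))"

definition pattern_le :: "perm \<Rightarrow> perm \<Rightarrow> bool" where
  "pattern_le p q \<longleftrightarrow> submatrix (perm_mat p) (perm_mat q)"

definition perm_class :: "perm set \<Rightarrow> bool" where
  "perm_class C \<longleftrightarrow> (\<forall>p\<in>C. is_perm p) \<and>
     (\<forall>p q. q \<in> C \<longrightarrow> is_perm p \<longrightarrow> pattern_le p q \<longrightarrow> p \<in> C)"

definition p_basis :: "perm set \<Rightarrow> perm set" where
  "p_basis C = {p. is_perm p \<and> p \<notin> C \<and>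
     (\<forall>q. is_perm q \<longrightarrow> pattern_le q p \<longrightarrow> q \<noteq> p \<longrightarrow> q \<in> C)}"

datatype side = Top | Bottom | Right | Left

fun ext_mat :: "side \<Rightarrow> perm \<Rightarrow> mat01" where
  "ext_mat Top p = (fst p + 1, fst p, {(snd p j, j) | j. j < fst p})"
| "ext_mat Bottom p = (fst p + 1, fst p, {(snd p j + 1, j) | j. j < fst p})"
| "ext_mat Right p = (fst p, fst p + 1, {(snd p j, j) | j. j < fst p})"
| "ext_mat Left p = (fst p, fst p + 1, {(snd p j, j + 1) | j. j < fst p})"

definition Av :: "mat01 set \<Rightarrow> perm set" where
  "Av M = {p. is_perm p \<and> \<not> (\<exists>A\<in>M. submatrix A (perm_mat p))}"

definition count_size :: "perm set \<Rightarrow> nat \<Rightarrow> nat" where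
  "count_size C n = card {p \<in> C. fst p = n}"

end

theory Submission
  imports Defs
begin

definition ic :: "nat \<Rightarrow> nat \<Rightarrow> nat" where "ic m j = (if j < m then j else Suc j)"
definition dc :: "nat \<Rightarrow> nat \<Rightarrow> nat" where "dc m j = (if j < m then j else j - 1)"

lemma ic_mono: "a < b \<Longrightarrow> ic m a < ic m b" by (simp add: ic_def)
lemma ic_neq: "ic m j \<noteq> m" by (simp add: ic_def)
lemma dc_ic[simp]: "dc m (ic m j) = j" by (simp add: ic_def dc_def)
lemma ic_dc: "j \<noteq> m \<Longrightarrow> ic m (dc m j) = j" unfolding ic_def dc_def by (cases j) auto
lemma dc_mono: "a < b \<Longrightarrow> a \<noteq> m \<Longrightarrow> b \<noteq> m \<Longrightarrow> dc m a < dc m b" by (auto simp add: dc_def)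
lemma dc_inj: "a \<noteq> m \<Longrightarrow> b \<noteq> m \<Longrightarrow> dc m a = dc m b \<Longrightarrow> a = b" by (metis ic_dc)
lemma ic_bound: "j < n - 1 \<Longrightarrow> ic m j < n" unfolding ic_def by auto
lemma dc_bound: "j < n \<Longrightarrow> j \<noteq> m \<Longrightarrow> m < n \<Longrightarrow> dc m j < n - 1" by (auto simp add: dc_def)
lemma dc_eq_iff: "x \<noteq> r \<Longrightarrow> (y = dc r x) \<longleftrightarrow> (ic r y = x)" by (auto simp add: dc_def ic_def)

definition emb :: "nat \<Rightarrow> nat \<Rightarrow> (nat\<Rightarrow>nat) \<Rightarrow> (nat\<Rightarrow>nat) \<Rightarrow> (nat\<Rightarrow>nat) \<Rightarrow> (nat\<Rightarrow>nat) \<Rightarrow> bool" where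
"emb k n st s f g \<longleftrightarrow> strict_mono_on {..<k} f \<and> (\<forall>i<k. f i < n) \<and> strict_mono_on {..<k} g \<and> (\<forall>j<k. g j < n) \<and>
   (\<forall>i<k. \<forall>j<k. (i = st j) \<longleftrightarrow> (f i = s (g j)))"

lemma mem_graph[simp]: "((a,b) \<in> {(h j, j) |j. j < k}) \<longleftrightarrow> b < k \<and> a = h b" by auto

lemma pattern_le_emb: "pattern_le (k, st) (n, s) \<longleftrightarrow> (\<exists>f g. emb k n st s f g)"
proof -
  have "pattern_le (k, st) (n, s) \<longleftrightarrow> (\<exists>f g. strict_mono_on {..<k} f \<and> (\<forall>i<k. f i < n) \<and> strict_mono_on {..<k} g \<and> (\<forall>j<k. g j < n) \<and>
   (\<forall>i<k. \<forall>j<k. (i = st j) \<longleftrightarrow> (f i = s (g j) \<and> g j < n)))"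
    unfolding pattern_le_def submatrix_def perm_mat_def by simp
  also have "\<dots> \<longleftrightarrow> (\<exists>f g. emb k n st s f g)"
    unfolding emb_def by (intro ex_cong1 conj_cong refl) blast
  finally show ?thesis .
qed

lemma emb_trans:
  assumes "emb ka kb sa sb f g" "emb kb kc sb sc f' g'"
  shows "emb ka kc sa sc (f' \<circ> f) (g' \<circ> g)"
proof -
  from assms have fb: "\<forall>i<ka. f i < kb" and gb: "\<forall>j<ka. g j < kb" unfolding emb_def by auto
  have m1: "strict_mono_on {..<ka} (f' \<circ> f)"
    using assms fb unfolding emb_def by (auto intro!: strict_mono_onI dest: strict_mono_onD)
  have m2: "strict_mono_on {..<ka} (g' \<circ> g)"
    using assms gb unfolding emb_def by (auto intro!: strict_mono_onI dest: strict_mono_onD)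
  have e: "\<forall>i<ka. \<forall>j<ka. (i = sa j) \<longleftrightarrow> (f' (f i) = sc (g' (g j)))"
  proof (intro allI impI)
    fix i j assume "i < ka" "j < ka"
    then have "(i = sa j) \<longleftrightarrow> (f i = sb (g j))" using assms(1) unfolding emb_def by auto
    also have "\<dots> \<longleftrightarrow> (f' (f i) = sc (g' (g j)))" using assms(2) fb gb \<open>i < ka\<close> \<open>j < ka\<close> unfolding emb_def by auto
    finally show "(i = sa j) \<longleftrightarrow> (f' (f i) = sc (g' (g j)))" .
  qed
  show ?thesis using m1 m2 e assms fb gb unfolding emb_def by auto
qed

lemma emb_size: assumes "emb k n st s f g" shows "k \<le> n"
proof -
  have "inj_on f {..<k}" using assms unfolding emb_def by (auto intro: strict_mono_on_imp_inj_on)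
  moreover have "f ` {..<k} \<subseteq> {..<n}" using assms unfolding emb_def by auto
  ultimately have "card {..<k} \<le> card {..<n}" by (intro card_inj_on_le) auto
  then show ?thesis by simp
qed

lemma smono_shift: "strict_mono_on {..<n} (f::nat\<Rightarrow>nat) \<Longrightarrow> i + d < n \<Longrightarrow> f i + d \<le> f (i + d)"
proof (induction d)
  case 0 then show ?case by simp
next
  case (Suc d)
  then have "f i + d \<le> f (i + d)" by simp
  moreover have "f (i + d) < f (i + Suc d)" using Suc.prems by (intro strict_mono_onD[OF Suc.prems(1)]) auto
  ultimately show ?case by simp
qed

lemma smono_id: assumes "strict_mono_on {..<n} (f::nat\<Rightarrow>nat)" "\<forall>i<n. f i < n" "i < n" shows "f i = i"
proof -
  have "f 0 + i \<le> f i" using smono_shift[OF assms(1), of 0 i] assms(3) by simp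
  moreover have "f i + (n - 1 - i) \<le> f (n - 1)" using smono_shift[OF assms(1), of i "n - 1 - i"] assms(3) by simp
  moreover have "f (n - 1) < n" using assms(2,3) by simp
  ultimately show ?thesis by linarith
qed

lemma emb_eq:
  assumes "emb n n st s f g" "st permutes {..<n}" "s permutes {..<n}"
  shows "st = s"
proof
  fix j
  show "st j = s j"
  proof (cases "j < n")
    case True
    have fi: "\<And>i. i < n \<Longrightarrow> f i = i" and gi: "\<And>i. i < n \<Longrightarrow> g i = i"
      using assms(1) smono_id unfolding emb_def by blast+
    have "st j < n" using permutes_in_image[OF assms(2)] True by simp
    then have "(st j = st j) \<longleftrightarrow> (f (st j) = s (g j))" using assms(1) True unfolding emb_def by blast
    then show ?thesis using fi gi True \<open>st j < n\<close> by simp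
  next
    case False
    then show ?thesis using permutes_not_in[OF assms(2)] permutes_not_in[OF assms(3)] by simp
  qed
qed

lemma avoid_equiv:
  assumes "emb k n st s f g" "st permutes {..<k}" "s permutes {..<n}" "m < n"
  shows "(\<forall>j<k. g j \<noteq> m) \<longleftrightarrow> (\<forall>i<k. f i \<noteq> s m)"
proof
  assume A: "\<forall>j<k. g j \<noteq> m"
  show "\<forall>i<k. f i \<noteq> s m"
  proof (intro allI impI)
    fix i assume i: "i < k"
    define j where "j = inv st i"
    have j: "j < k" "st j = i" using i permutes_in_image[OF permutes_inv[OF assms(2)]] permutes_inverses[OF assms(2)]
      unfolding j_def by auto
    then have "f i = s (g j)" using assms(1) i unfolding emb_def by blast
    moreover have "g j \<noteq> m" using A j by auto
    ultimately show "f i \<noteq> s m" using permutes_inj[OF assms(3)] by (auto dest: injD)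
  qed
next
  assume A: "\<forall>i<k. f i \<noteq> s m"
  show "\<forall>j<k. g j \<noteq> m"
  proof (intro allI impI)
    fix j assume j: "j < k"
    have "st j < k" using j permutes_in_image[OF assms(2)] by simp
    then have "f (st j) = s (g j)" using assms(1) j unfolding emb_def by blast
    then show "g j \<noteq> m" using A \<open>st j < k\<close> by auto
  qed
qed

definition del :: "perm \<Rightarrow> nat \<Rightarrow> perm" where
  "del p m = (fst p - 1, \<lambda>j. if j < fst p - 1 then dc (snd p m) (snd p (ic m j)) else j)"

lemma del_emb:
  assumes s: "s permutes {..<n}" and st: "st permutes {..<k}" and m: "m < n"
  shows "pattern_le (k, st) (del (n, s) m) \<longleftrightarrow> (\<exists>f g. emb k n st s f g \<and> (\<forall>j<k. g j \<noteq> m))"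
proof -
  define r where "r = s m"
  define s' where "s' = (\<lambda>j. if j < n - 1 then dc r (s (ic m j)) else j)"
  have d: "del (n, s) m = (n - 1, s')" unfolding del_def s'_def r_def fst_conv snd_conv by (rule refl)
  have sinj: "\<And>a b. s a = s b \<Longrightarrow> a = b" using permutes_inj[OF s] by (auto dest: injD)
  have rn: "r < n" using m permutes_in_image[OF s] unfolding r_def by simp
  show ?thesis
  proof
    assume "pattern_le (k, st) (del (n, s) m)"
    then obtain f g where e: "emb k (n - 1) st s' f g" unfolding d pattern_le_emb by blast
    have "emb k n st s (ic r \<circ> f) (ic m \<circ> g)"
      unfolding emb_def
    proof (intro conjI allI impI)
      show "strict_mono_on {..<k} (ic r \<circ> f)" using e unfolding emb_def
        by (auto intro!: strict_mono_onI ic_mono dest: strict_mono_onD)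
      show "strict_mono_on {..<k} (ic m \<circ> g)" using e unfolding emb_def
        by (auto intro!: strict_mono_onI ic_mono dest: strict_mono_onD)
      fix i assume "i < k" then show "(ic r \<circ> f) i < n" using e ic_bound unfolding emb_def by auto
    next
      fix j assume "j < k" then show "(ic m \<circ> g) j < n" using e ic_bound unfolding emb_def by auto
    next
      fix i j assume ij: "i < k" "j < k"
      have gj: "g j < n - 1" using e ij unfolding emb_def by auto
      have ne: "s (ic m (g j)) \<noteq> r" unfolding r_def using ic_neq sinj by metis
      have "(i = st j) \<longleftrightarrow> (f i = s' (g j))" using e ij unfolding emb_def by auto
      also have "\<dots> \<longleftrightarrow> (f i = dc r (s (ic m (g j))))" using gj unfolding s'_def by simp
      also have "\<dots> \<longleftrightarrow> (ic r (f i) = s (ic m (g j)))" using dc_eq_iff[OF ne] by simp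
      finally show "(i = st j) \<longleftrightarrow> ((ic r \<circ> f) i = s ((ic m \<circ> g) j))" by simp
    qed
    moreover have "\<forall>j<k. (ic m \<circ> g) j \<noteq> m" using ic_neq by simp
    ultimately show "\<exists>f g. emb k n st s f g \<and> (\<forall>j<k. g j \<noteq> m)" by blast
  next
    assume "\<exists>f g. emb k n st s f g \<and> (\<forall>j<k. g j \<noteq> m)"
    then obtain F G where e: "emb k n st s F G" and G: "\<forall>j<k. G j \<noteq> m" by blast
    have F: "\<forall>i<k. F i \<noteq> r" using avoid_equiv[OF e st s m] G unfolding r_def by simp
    have "emb k (n - 1) st s' (dc r \<circ> F) (dc m \<circ> G)"
      unfolding emb_def
    proof (intro conjI allI impI)
      show "strict_mono_on {..<k} (dc r \<circ> F)"
      proof (rule strict_mono_onI)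
        fix a b assume ab: "a \<in> {..<k}" "b \<in> {..<k}" "a < b"
        then have "F a < F b" using e strict_mono_onD unfolding emb_def by blast
        then show "(dc r \<circ> F) a < (dc r \<circ> F) b" using dc_mono F ab by simp
      qed
      show "strict_mono_on {..<k} (dc m \<circ> G)"
      proof (rule strict_mono_onI)
        fix a b assume ab: "a \<in> {..<k}" "b \<in> {..<k}" "a < b"
        then have "G a < G b" using e strict_mono_onD unfolding emb_def by blast
        then show "(dc m \<circ> G) a < (dc m \<circ> G) b" using dc_mono G ab by simp
      qed
      fix i assume "i < k" then show "(dc r \<circ> F) i < n - 1" using e F dc_bound rn unfolding emb_def by auto
    next
      fix j assume "j < k" then show "(dc m \<circ> G) j < n - 1" using e G dc_bound m unfolding emb_def by auto
    next
      fix i j assume ij: "i < k" "j < k"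
      have gj: "dc m (G j) < n - 1" using e G dc_bound m ij unfolding emb_def by auto
      have ne: "s (G j) \<noteq> r" unfolding r_def using G ij sinj by metis
      have "(i = st j) \<longleftrightarrow> (F i = s (G j))" using e ij unfolding emb_def by auto
      also have "\<dots> \<longleftrightarrow> (dc r (F i) = dc r (s (G j)))" using dc_inj[OF _ ne] F ij by auto
      also have "\<dots> \<longleftrightarrow> (dc r (F i) = s' (dc m (G j)))" using gj G ij ic_dc unfolding s'_def by simp
      finally show "(i = st j) \<longleftrightarrow> ((dc r \<circ> F) i = s' ((dc m \<circ> G) j))" by simp
    qed
    then show "pattern_le (k, st) (del (n, s) m)" unfolding d pattern_le_emb by blast
  qed
qed

lemma mem_graph2[simp]: "((a,b) \<in> {(h j, Suc j) |j. j < k}) \<longleftrightarrow> (\<exists>c. b = Suc c \<and> c < k \<and> a = h c)" by auto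

lemma smono_restr: "strict_mono_on {..<k+1} (f::nat\<Rightarrow>nat) \<Longrightarrow> strict_mono_on {..<k} f"
  by (erule monotone_on_subset) auto

lemma perm_lt: "st permutes {..<k} \<Longrightarrow> j < k \<Longrightarrow> st j < k"
  using permutes_in_image by fastforce

lemma perm_injD: "s permutes S \<Longrightarrow> s a = s b \<Longrightarrow> a = b"
  using permutes_inj by (auto dest: injD)

lemma side_top:
  assumes s: "s permutes {..<n}" and st: "st permutes {..<k}" and m: "m < n" and sm: "s m = n - 1"
  shows "submatrix (ext_mat Top (k, st)) (perm_mat (n, s)) \<longleftrightarrow> (\<exists>f g. emb k n st s f g \<and> (\<forall>j<k. g j \<noteq> m))"
proof
  assume "submatrix (ext_mat Top (k, st)) (perm_mat (n, s))"
  then obtain f g where f1: "strict_mono_on {..<k+1} f" and f2: "\<forall>i<k+1. f i < n"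
    and g1: "strict_mono_on {..<k} g" and g2: "\<forall>j<k. g j < n"
    and E: "\<forall>i<k+1. \<forall>j<k. ((i,j) \<in> {(st j, j) |j. j < k}) \<longleftrightarrow> ((f i, g j) \<in> {(s j, j) |j. j < n})"
    unfolding submatrix_def perm_mat_def by auto
  have e: "emb k n st s f g" unfolding emb_def
    using smono_restr[of k f] f1 f2 g1 g2 E by auto
  have "\<forall>i<k. f i \<noteq> s m"
  proof (intro allI impI)
    fix i assume "i < k"
    then have "f i < f k" using strict_mono_onD[OF f1] by auto
    moreover have "f k < n" using f2 by auto
    ultimately show "f i \<noteq> s m" using sm by auto
  qed
  then show "\<exists>f g. emb k n st s f g \<and> (\<forall>j<k. g j \<noteq> m)" using avoid_equiv[OF e st s m] e by blast
next
  assume "\<exists>f g. emb k n st s f g \<and> (\<forall>j<k. g j \<noteq> m)"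
  then obtain f g where e: "emb k n st s f g" and G: "\<forall>j<k. g j \<noteq> m" by blast
  have F: "\<forall>i<k. f i \<noteq> s m" using avoid_equiv[OF e st s m] G by simp
  define F' where "F' = (\<lambda>i. if i < k then f i else n - 1)"
  have Fl: "\<forall>i<k. f i < n - 1" using e F sm unfolding emb_def by fastforce
  have 1: "strict_mono_on {..<k+1} F'"
  proof (rule strict_mono_onI)
    fix a b assume ab: "a \<in> {..<k+1}" "b \<in> {..<k+1}" "a < b"
    then have "a < k" by auto
    show "F' a < F' b"
    proof (cases "b < k")
      case True then show ?thesis using ab \<open>a < k\<close> e strict_mono_onD[of "{..<k}" f a b] unfolding emb_def F'_def by auto
    next
      case False then show ?thesis using Fl \<open>a < k\<close> unfolding F'_def by auto
    qed
  qed
  have 2: "\<forall>i<k+1. F' i < n" using e m unfolding emb_def F'_def by auto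
  have 3: "\<forall>i<k+1. \<forall>j<k. ((i,j) \<in> {(st j, j) |j. j < k}) \<longleftrightarrow> ((F' i, g j) \<in> {(s j, j) |j. j < n})"
  proof (intro allI impI)
    fix i j assume ij: "i < k+1" "j < k"
    show "((i,j) \<in> {(st j, j) |j. j < k}) \<longleftrightarrow> ((F' i, g j) \<in> {(s j, j) |j. j < n})"
    proof (cases "i < k")
      case True then show ?thesis using e ij unfolding emb_def F'_def by auto
    next
      case False
      then have "i = k" using ij by auto
      have "st j < k" using perm_lt[OF st ij(2)] .
      moreover have "s (g j) \<noteq> n - 1" using G ij perm_injD[OF s, of "g j" m] sm by auto
      ultimately show ?thesis using \<open>i = k\<close> unfolding F'_def by auto
    qed
  qed
  show "submatrix (ext_mat Top (k, st)) (perm_mat (n, s))"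
    unfolding submatrix_def perm_mat_def ext_mat.simps fst_conv snd_conv prod.case
    using 1 2 3 e unfolding emb_def by blast
qed

lemma side_bottom:
  assumes s: "s permutes {..<n}" and st: "st permutes {..<k}" and m: "m < n" and sm: "s m = 0"
  shows "submatrix (ext_mat Bottom (k, st)) (perm_mat (n, s)) \<longleftrightarrow> (\<exists>f g. emb k n st s f g \<and> (\<forall>j<k. g j \<noteq> m))"
proof
  assume "submatrix (ext_mat Bottom (k, st)) (perm_mat (n, s))"
  then obtain f g where f1: "strict_mono_on {..<k+1} f" and f2: "\<forall>i<k+1. f i < n"
    and g1: "strict_mono_on {..<k} g" and g2: "\<forall>j<k. g j < n"
    and E: "\<forall>i<k+1. \<forall>j<k. ((i,j) \<in> {(st j + 1, j) |j. j < k}) \<longleftrightarrow> ((f i, g j) \<in> {(s j, j) |j. j < n})"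
    unfolding submatrix_def perm_mat_def by auto
  define f' where "f' = (\<lambda>i. f (Suc i))"
  have 1: "strict_mono_on {..<k} f'"
  proof (rule strict_mono_onI)
    fix a b assume ab: "a \<in> {..<k}" "b \<in> {..<k}" "a < b"
    then show "f' a < f' b" using strict_mono_onD[OF f1, of "Suc a" "Suc b"] unfolding f'_def by auto
  qed
  have e: "emb k n st s f' g" unfolding emb_def
  proof (intro conjI allI impI 1 g1)
    fix i assume "i < k" then show "f' i < n" using f2 unfolding f'_def by auto
  next
    fix j assume "j < k" then show "g j < n" using g2 by auto
  next
    fix i j assume ij: "i < k" "j < k"
    then have "((Suc i,j) \<in> {(st j + 1, j) |j. j < k}) \<longleftrightarrow> ((f (Suc i), g j) \<in> {(s j, j) |j. j < n})"
      using E by auto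
    then show "(i = st j) \<longleftrightarrow> (f' i = s (g j))" using ij g2 unfolding f'_def by auto
  qed
  have "\<forall>i<k. f' i \<noteq> s m"
  proof (intro allI impI)
    fix i assume "i < k"
    then have "f 0 < f (Suc i)" using strict_mono_onD[OF f1, of 0 "Suc i"] by auto
    then show "f' i \<noteq> s m" using sm unfolding f'_def by auto
  qed
  then show "\<exists>f g. emb k n st s f g \<and> (\<forall>j<k. g j \<noteq> m)" using avoid_equiv[OF e st s m] e by blast
next
  assume "\<exists>f g. emb k n st s f g \<and> (\<forall>j<k. g j \<noteq> m)"
  then obtain f g where e: "emb k n st s f g" and G: "\<forall>j<k. g j \<noteq> m" by blast
  have F: "\<forall>i<k. f i \<noteq> s m" using avoid_equiv[OF e st s m] G by simp
  define F' where "F' = (\<lambda>i. if i = 0 then 0 else f (i - 1))"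
  have Fl: "\<forall>i<k. 0 < f i" using F sm by auto
  have 1: "strict_mono_on {..<k+1} F'"
  proof (rule strict_mono_onI)
    fix a b assume ab: "a \<in> {..<k+1}" "b \<in> {..<k+1}" "a < b"
    show "F' a < F' b"
    proof (cases "a = 0")
      case False then show ?thesis using ab e strict_mono_onD[of "{..<k}" f "a - 1" "b - 1"] unfolding emb_def F'_def by auto
    next
      case True then show ?thesis using Fl ab unfolding F'_def by auto
    qed
  qed
  have 2: "\<forall>i<k+1. F' i < n" using e m unfolding emb_def F'_def by auto
  have 3: "\<forall>i<k+1. \<forall>j<k. ((i,j) \<in> {(st j + 1, j) |j. j < k}) \<longleftrightarrow> ((F' i, g j) \<in> {(s j, j) |j. j < n})"
  proof (intro allI impI)
    fix i j assume ij: "i < k+1" "j < k"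
    show "((i,j) \<in> {(st j + 1, j) |j. j < k}) \<longleftrightarrow> ((F' i, g j) \<in> {(s j, j) |j. j < n})"
    proof (cases "i = 0")
      case False
      then have H: "(i - 1 = st j) \<longleftrightarrow> (f (i - 1) = s (g j))" using e ij unfolding emb_def by auto
      have a: "((i,j) \<in> {(st j + 1, j) |j. j < k}) \<longleftrightarrow> (i - 1 = st j)" using ij False by auto
      have b: "((F' i, g j) \<in> {(s j, j) |j. j < n}) \<longleftrightarrow> (f (i - 1) = s (g j))" using e ij False unfolding emb_def F'_def by auto
      show ?thesis using a b H by simp
    next
      case True
      have "s (g j) \<noteq> 0" using G ij perm_injD[OF s, of "g j" m] sm by auto
      then show ?thesis using True unfolding F'_def by auto
    qed
  qed
  show "submatrix (ext_mat Bottom (k, st)) (perm_mat (n, s))"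
    unfolding submatrix_def perm_mat_def ext_mat.simps fst_conv snd_conv prod.case
    using 1 2 3 e unfolding emb_def by blast
qed

lemma side_right:
  assumes s: "s permutes {..<n}" and st: "st permutes {..<k}" and m: "m = n - 1" and n: "0 < n"
  shows "submatrix (ext_mat Right (k, st)) (perm_mat (n, s)) \<longleftrightarrow> (\<exists>f g. emb k n st s f g \<and> (\<forall>j<k. g j \<noteq> m))"
proof
  assume "submatrix (ext_mat Right (k, st)) (perm_mat (n, s))"
  then obtain f g where f1: "strict_mono_on {..<k} f" and f2: "\<forall>i<k. f i < n"
    and g1: "strict_mono_on {..<k+1} g" and g2: "\<forall>j<k+1. g j < n"
    and E: "\<forall>i<k. \<forall>j<k+1. ((i,j) \<in> {(st j, j) |j. j < k}) \<longleftrightarrow> ((f i, g j) \<in> {(s j, j) |j. j < n})"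
    unfolding submatrix_def perm_mat_def by auto
  have e: "emb k n st s f g" unfolding emb_def
  proof (intro conjI allI impI smono_restr[OF g1] f1)
    fix i assume "i < k" then show "f i < n" using f2 by auto
  next
    fix j assume "j < k" then show "g j < n" using g2 by auto
  next
    fix i j assume ij: "i < k" "j < k"
    then have "((i,j) \<in> {(st j, j) |j. j < k}) \<longleftrightarrow> ((f i, g j) \<in> {(s j, j) |j. j < n})"
      using E[rule_format, of i j] by simp
    then show "(i = st j) \<longleftrightarrow> (f i = s (g j))" using ij g2 by auto
  qed
  have "\<forall>j<k. g j \<noteq> m"
  proof (intro allI impI)
    fix j assume "j < k"
    then have "g j < g k" using strict_mono_onD[OF g1] by auto
    moreover have "g k < n" using g2 by auto
    ultimately show "g j \<noteq> m" using m by auto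
  qed
  then show "\<exists>f g. emb k n st s f g \<and> (\<forall>j<k. g j \<noteq> m)" using e by blast
next
  assume "\<exists>f g. emb k n st s f g \<and> (\<forall>j<k. g j \<noteq> m)"
  then obtain f g where e: "emb k n st s f g" and G: "\<forall>j<k. g j \<noteq> m" by blast
  have mn: "m < n" using m n by simp
  have F: "\<forall>i<k. f i \<noteq> s m" using avoid_equiv[OF e st s mn] G by simp
  define G' where "G' = (\<lambda>j. if j < k then g j else n - 1)"
  have Gl: "\<forall>j<k. g j < n - 1" using e G m unfolding emb_def by fastforce
  have 1: "strict_mono_on {..<k+1} G'"
  proof (rule strict_mono_onI)
    fix a b assume ab: "a \<in> {..<k+1}" "b \<in> {..<k+1}" "a < b"
    then have "a < k" by auto
    show "G' a < G' b"
    proof (cases "b < k")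
      case True then show ?thesis using ab \<open>a < k\<close> e strict_mono_onD[of "{..<k}" g a b] unfolding emb_def G'_def by auto
    next
      case False then show ?thesis using Gl \<open>a < k\<close> unfolding G'_def by auto
    qed
  qed
  have 2: "\<forall>j<k+1. G' j < n" using e n unfolding emb_def G'_def by auto
  have 3: "\<forall>i<k. \<forall>j<k+1. ((i,j) \<in> {(st j, j) |j. j < k}) \<longleftrightarrow> ((f i, G' j) \<in> {(s j, j) |j. j < n})"
  proof (intro allI impI)
    fix i j assume ij: "i < k" "j < k+1"
    show "((i,j) \<in> {(st j, j) |j. j < k}) \<longleftrightarrow> ((f i, G' j) \<in> {(s j, j) |j. j < n})"
    proof (cases "j < k")
      case True then show ?thesis using e ij unfolding emb_def G'_def by auto
    next
      case False
      then show ?thesis using F ij m n unfolding G'_def by auto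
    qed
  qed
  show "submatrix (ext_mat Right (k, st)) (perm_mat (n, s))"
    unfolding submatrix_def perm_mat_def ext_mat.simps fst_conv snd_conv prod.case
    using 1 2 3 e unfolding emb_def by blast
qed

lemma side_left:
  assumes s: "s permutes {..<n}" and st: "st permutes {..<k}" and m: "m = 0" and n: "0 < n"
  shows "submatrix (ext_mat Left (k, st)) (perm_mat (n, s)) \<longleftrightarrow> (\<exists>f g. emb k n st s f g \<and> (\<forall>j<k. g j \<noteq> m))"
proof
  assume "submatrix (ext_mat Left (k, st)) (perm_mat (n, s))"
  then obtain f g where f1: "strict_mono_on {..<k} f" and f2: "\<forall>i<k. f i < n"
    and g1: "strict_mono_on {..<k+1} g" and g2: "\<forall>j<k+1. g j < n"
    and E: "\<forall>i<k. \<forall>j<k+1. ((i,j) \<in> {(st j, j + 1) |j. j < k}) \<longleftrightarrow> ((f i, g j) \<in> {(s j, j) |j. j < n})"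
    unfolding submatrix_def perm_mat_def by auto
  define g' where "g' = (\<lambda>i. g (Suc i))"
  have 1: "strict_mono_on {..<k} g'"
  proof (rule strict_mono_onI)
    fix a b assume ab: "a \<in> {..<k}" "b \<in> {..<k}" "a < b"
    then show "g' a < g' b" using strict_mono_onD[OF g1, of "Suc a" "Suc b"] unfolding g'_def by auto
  qed
  have e: "emb k n st s f g'" unfolding emb_def
  proof (intro conjI allI impI 1 f1)
    fix i assume "i < k" then show "f i < n" using f2 by auto
  next
    fix j assume "j < k" then show "g' j < n" using g2 unfolding g'_def by auto
  next
    fix i j assume ij: "i < k" "j < k"
    then have "((i,Suc j) \<in> {(st j, j + 1) |j. j < k}) \<longleftrightarrow> ((f i, g (Suc j)) \<in> {(s j, j) |j. j < n})"
      using E[rule_format, of i "Suc j"] by (simp del: mem_graph2)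
    then show "(i = st j) \<longleftrightarrow> (f i = s (g' j))" using ij g2 unfolding g'_def by auto
  qed
  have "\<forall>j<k. g' j \<noteq> m"
  proof (intro allI impI)
    fix j assume "j < k"
    then have "g 0 < g (Suc j)" using strict_mono_onD[OF g1, of 0 "Suc j"] by auto
    then show "g' j \<noteq> m" using m unfolding g'_def by auto
  qed
  then show "\<exists>f g. emb k n st s f g \<and> (\<forall>j<k. g j \<noteq> m)" using e by blast
next
  assume "\<exists>f g. emb k n st s f g \<and> (\<forall>j<k. g j \<noteq> m)"
  then obtain f g where e: "emb k n st s f g" and G: "\<forall>j<k. g j \<noteq> m" by blast
  have mn: "m < n" using m n by simp
  have F: "\<forall>i<k. f i \<noteq> s m" using avoid_equiv[OF e st s mn] G by simp
  define G' where "G' = (\<lambda>i. if i = 0 then 0 else g (i - 1))"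
  have Gl: "\<forall>j<k. 0 < g j" using G m by auto
  have 1: "strict_mono_on {..<k+1} G'"
  proof (rule strict_mono_onI)
    fix a b assume ab: "a \<in> {..<k+1}" "b \<in> {..<k+1}" "a < b"
    show "G' a < G' b"
    proof (cases "a = 0")
      case False then show ?thesis using ab e strict_mono_onD[of "{..<k}" g "a - 1" "b - 1"] unfolding emb_def G'_def by auto
    next
      case True then show ?thesis using Gl ab unfolding G'_def by auto
    qed
  qed
  have 2: "\<forall>j<k+1. G' j < n" using e n unfolding emb_def G'_def by auto
  have 3: "\<forall>i<k. \<forall>j<k+1. ((i,j) \<in> {(st j, j + 1) |j. j < k}) \<longleftrightarrow> ((f i, G' j) \<in> {(s j, j) |j. j < n})"
  proof (intro allI impI)
    fix i j assume ij: "i < k" "j < k+1"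
    show "((i,j) \<in> {(st j, j + 1) |j. j < k}) \<longleftrightarrow> ((f i, G' j) \<in> {(s j, j) |j. j < n})"
    proof (cases "j = 0")
      case False
      then have "(i = st (j - 1)) \<longleftrightarrow> (f i = s (g (j - 1)))" using e ij unfolding emb_def by auto
      then show ?thesis using e ij False unfolding emb_def G'_def by (cases j) auto
    next
      case True
      then show ?thesis using F ij m n unfolding G'_def by auto
    qed
  qed
  show "submatrix (ext_mat Left (k, st)) (perm_mat (n, s))"
    unfolding submatrix_def perm_mat_def ext_mat.simps fst_conv snd_conv prod.case
    using 1 2 3 e unfolding emb_def by blast
qed

lemma pattern_le_refl: "pattern_le p p"
proof -
  obtain n s where p: "p = (n, s)" by (cases p)
  have "emb n n s s id id" unfolding emb_def by (auto intro: strict_mono_onI)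
  then show ?thesis unfolding p pattern_le_emb by blast
qed

lemma pattern_le_trans: "pattern_le a b \<Longrightarrow> pattern_le b c \<Longrightarrow> pattern_le a c"
proof -
  assume ab: "pattern_le a b" and bc: "pattern_le b c"
  obtain ka sa where a: "a = (ka, sa)" by (cases a)
  obtain kb sb where b: "b = (kb, sb)" by (cases b)
  obtain kc sc where c: "c = (kc, sc)" by (cases c)
  from ab bc show ?thesis unfolding a b c pattern_le_emb using emb_trans by blast
qed

lemma pattern_le_size: "pattern_le a b \<Longrightarrow> fst a \<le> fst b"
proof -
  assume ab: "pattern_le a b"
  obtain ka sa where a: "a = (ka, sa)" by (cases a)
  obtain kb sb where b: "b = (kb, sb)" by (cases b)
  from ab show ?thesis unfolding a b pattern_le_emb using emb_size by auto
qed

lemma pattern_le_eq: "pattern_le a b \<Longrightarrow> fst a = fst b \<Longrightarrow> is_perm a \<Longrightarrow> is_perm b \<Longrightarrow> a = b"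
proof -
  assume ab: "pattern_le a b" and eq: "fst a = fst b" and pa: "is_perm a" and pb: "is_perm b"
  obtain ka sa where a: "a = (ka, sa)" by (cases a)
  obtain kb sb where b: "b = (kb, sb)" by (cases b)
  from eq have "kb = ka" unfolding a b by simp
  with ab obtain f g where "emb ka ka sa sb f g" unfolding a b pattern_le_emb by blast
  moreover have "sa permutes {..<ka}" "sb permutes {..<ka}" using pa pb \<open>kb = ka\<close> unfolding a b is_perm_def by auto
  ultimately have "sa = sb" using emb_eq by blast
  then show ?thesis unfolding a b using \<open>kb = ka\<close> by simp
qed

lemma basis_char:
  assumes C: "perm_class C" and q: "is_perm q"
  shows "q \<in> C \<longleftrightarrow> \<not> (\<exists>\<tau>\<in>p_basis C. pattern_le \<tau> q)"
proof
  assume "q \<in> C"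
  then show "\<not> (\<exists>\<tau>\<in>p_basis C. pattern_le \<tau> q)" using C unfolding perm_class_def p_basis_def by blast
next
  assume nb: "\<not> (\<exists>\<tau>\<in>p_basis C. pattern_le \<tau> q)"
  show "q \<in> C"
  proof (rule ccontr)
    assume "q \<notin> C"
    define P where "P = (\<lambda>t. is_perm t \<and> t \<notin> C \<and> pattern_le t q)"
    have "P q" unfolding P_def using q \<open>q \<notin> C\<close> pattern_le_refl by blast
    then obtain t where t: "P t" and tmin: "\<forall>y. P y \<longrightarrow> fst t \<le> fst y" using ex_has_least_nat[of P q fst] by blast
    have "t \<in> p_basis C" unfolding p_basis_def
    proof (intro CollectI conjI allI impI)
      show "is_perm t" "t \<notin> C" using t unfolding P_def by auto
      fix r assume r: "is_perm r" "pattern_le r t" "r \<noteq> t"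
      show "r \<in> C"
      proof (rule ccontr)
        assume "r \<notin> C"
        then have "P r" unfolding P_def using r t pattern_le_trans unfolding P_def by blast
        then have "fst t \<le> fst r" using tmin by blast
        moreover have "fst r \<le> fst t" using pattern_le_size r by blast
        ultimately have "r = t" using pattern_le_eq[OF r(2)] r t unfolding P_def by auto
        then show False using r by simp
      qed
    qed
    then show False using nb t unfolding P_def by blast
  qed
qed

definition ins :: "nat \<Rightarrow> nat \<Rightarrow> perm \<Rightarrow> perm" where
  "ins m r q = (Suc (fst q), \<lambda>j. if j < Suc (fst q) then (if j = m then r else ic r (snd q (dc m j))) else j)"

lemma perm_from_inj:
  assumes "inj_on f {..<(n::nat)}" "\<forall>j<n. f j < n" "\<forall>j. j \<ge> n \<longrightarrow> f j = j"
  shows "f permutes {..<n}"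
proof (rule bij_imp_permutes)
  have sub: "f ` {..<n} \<subseteq> {..<n}" using assms(2) by auto
  have "f ` {..<n} = {..<n}" using endo_inj_surj[of "{..<n}" f] sub assms(1) by simp
  then show "bij_betw f {..<n} {..<n}" using assms(1) unfolding bij_betw_def by auto
  fix x assume "x \<notin> {..<n}" then show "f x = x" using assms(3) by auto
qed

lemma del_perm:
  assumes s: "s permutes {..<n}" and m: "m < n"
  shows "is_perm (del (n, s) m)"
proof -
  define r where "r = s m"
  have rn: "r < n" using m permutes_in_image[OF s] unfolding r_def by simp
  define s' where "s' = (\<lambda>j. if j < n - 1 then dc r (s (ic m j)) else j)"
  have d: "del (n, s) m = (n - 1, s')" unfolding del_def s'_def r_def fst_conv snd_conv by (rule refl)
  have ne: "\<And>j. s (ic m j) \<noteq> r" unfolding r_def using ic_neq perm_injD[OF s] by metis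
  have lt: "\<And>j. j < n - 1 \<Longrightarrow> s (ic m j) < n" using ic_bound permutes_in_image[OF s] by simp
  have "s' permutes {..<n - 1}"
  proof (rule perm_from_inj)
    show "inj_on s' {..<n - 1}"
    proof (rule inj_onI)
      fix a b assume ab: "a \<in> {..<n - 1}" "b \<in> {..<n - 1}" "s' a = s' b"
      then have "dc r (s (ic m a)) = dc r (s (ic m b))" unfolding s'_def by auto
      then have "s (ic m a) = s (ic m b)" using dc_inj ne by blast
      then have "ic m a = ic m b" using perm_injD[OF s] by blast
      then show "a = b" using dc_ic by metis
    qed
    show "\<forall>j<n - 1. s' j < n - 1" using dc_bound[OF lt ne rn] unfolding s'_def by auto
    show "\<forall>j. j \<ge> n - 1 \<longrightarrow> s' j = j" unfolding s'_def by auto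
  qed
  then show ?thesis unfolding d is_perm_def by simp
qed

lemma ins_perm:
  assumes t: "t permutes {..<n'}" and m: "m < Suc n'" and r: "r < Suc n'"
  shows "is_perm (ins m r (n', t))"
proof -
  define s where "s = (\<lambda>j. if j < Suc n' then (if j = m then r else ic r (t (dc m j))) else j)"
  have d: "ins m r (n', t) = (Suc n', s)" unfolding ins_def s_def fst_conv snd_conv by (rule refl)
  have db: "\<And>j. j < Suc n' \<Longrightarrow> j \<noteq> m \<Longrightarrow> dc m j < n'" using dc_bound[of _ "Suc n'" m] m by simp
  have "s permutes {..<Suc n'}"
  proof (rule perm_from_inj)
    show "inj_on s {..<Suc n'}"
    proof (rule inj_onI)
      fix a b assume ab: "a \<in> {..<Suc n'}" "b \<in> {..<Suc n'}" "s a = s b"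
      show "a = b"
      proof (cases "a = m \<or> b = m")
        case True
        then show ?thesis using ab ic_neq unfolding s_def by (auto, metis ic_neq, metis ic_neq)
      next
        case False
        then have "ic r (t (dc m a)) = ic r (t (dc m b))" using ab unfolding s_def by auto
        then have "t (dc m a) = t (dc m b)" using dc_ic by metis
        then have "dc m a = dc m b" using perm_injD[OF t] by blast
        then show "a = b" using dc_inj False by blast
      qed
    qed
    show "\<forall>j<Suc n'. s j < Suc n'"
    proof (intro allI impI)
      fix j assume j: "j < Suc n'"
      show "s j < Suc n'"
      proof (cases "j = m")
        case True then show ?thesis using r j unfolding s_def by simp
      next
        case False
        then have "t (dc m j) < n'" using db[OF j] permutes_in_image[OF t] by simp
        then show ?thesis using j False ic_bound[of "t (dc m j)" "Suc n'" r] unfolding s_def by simp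
      qed
    qed
    show "\<forall>j. j \<ge> Suc n' \<longrightarrow> s j = j" unfolding s_def by auto
  qed
  then show ?thesis unfolding d is_perm_def by simp
qed

lemma del_ins:
  assumes t: "t permutes {..<n'}" and m: "m < Suc n'"
  shows "del (ins m r (n', t)) m = (n', t)"
proof -
  define s where "s = (\<lambda>j. if j < Suc n' then (if j = m then r else ic r (t (dc m j))) else j)"
  have d: "ins m r (n', t) = (Suc n', s)" unfolding ins_def s_def fst_conv snd_conv by (rule refl)
  have "(\<lambda>j. if j < n' then dc (s m) (s (ic m j)) else j) = t"
  proof
    fix j show "(if j < n' then dc (s m) (s (ic m j)) else j) = t j"
    proof (cases "j < n'")
      case True
      have "ic m j < Suc n'" using ic_bound[of j "Suc n'" m] True by simp
      then have "s (ic m j) = ic r (t j)" unfolding s_def using ic_neq by simp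
      moreover have "s m = r" unfolding s_def using m by simp
      ultimately show ?thesis using True by simp
    next
      case False then show ?thesis using permutes_not_in[OF t] by simp
    qed
  qed
  then show ?thesis unfolding d del_def fst_conv snd_conv by simp
qed

lemma ins_del:
  assumes s: "s permutes {..<n}" and m: "m < n"
  shows "ins m (s m) (del (n, s) m) = (n, s)"
proof -
  define r where "r = s m"
  define s' where "s' = (\<lambda>j. if j < n - 1 then dc r (s (ic m j)) else j)"
  have d: "del (n, s) m = (n - 1, s')" unfolding del_def s'_def r_def fst_conv snd_conv by (rule refl)
  have n: "Suc (n - 1) = n" using m by simp
  have "(\<lambda>j. if j < n then (if j = m then r else ic r (s' (dc m j))) else j) = s"
  proof
    fix j show "(if j < n then (if j = m then r else ic r (s' (dc m j))) else j) = s j"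
    proof (cases "j < n")
      case True
      show ?thesis
      proof (cases "j = m")
        case True then show ?thesis using \<open>j < n\<close> unfolding r_def by simp
      next
        case False
        have "dc m j < n - 1" using dc_bound[OF \<open>j < n\<close> False m] .
        then have "s' (dc m j) = dc r (s j)" unfolding s'_def using ic_dc[OF False] by simp
        moreover have "s j \<noteq> r" unfolding r_def using False perm_injD[OF s] by blast
        ultimately show ?thesis using \<open>j < n\<close> False ic_dc by simp
      qed
    next
      case False then show ?thesis using permutes_not_in[OF s] by simp
    qed
  qed
  then show ?thesis unfolding d ins_def fst_conv snd_conv n r_def by simp
qed

fun mcol :: "side \<Rightarrow> perm \<Rightarrow> nat" where
  "mcol Top p = inv (snd p) (fst p - 1)"
| "mcol Bottom p = inv (snd p) 0"
| "mcol Right p = fst p - 1"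
| "mcol Left p = 0"

fun T :: "side \<Rightarrow> nat \<Rightarrow> (nat \<times> nat) set" where
  "T Top n = (\<lambda>m. (m, n - 1)) ` {..<n}"
| "T Bottom n = (\<lambda>m. (m, 0)) ` {..<n}"
| "T Right n = (\<lambda>r. (n - 1, r)) ` {..<n}"
| "T Left n = (\<lambda>r. (0, r)) ` {..<n}"

lemma card_T: "card (T d n) = n"
  by (cases d) (auto simp: card_image inj_on_def)

lemma mcol_props:
  assumes s: "s permutes {..<n}" and n: "0 < n"
  shows "mcol d (n, s) < n \<and> (mcol d (n, s), s (mcol d (n, s))) \<in> T d n"
proof (cases d)
  case Top
  have "inv s (n - 1) < n" using permutes_in_image[OF permutes_inv[OF s]] n by simp
  moreover have "s (inv s (n - 1)) = n - 1" using permutes_inverses[OF s] by simp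
  ultimately show ?thesis using Top by auto
next
  case Bottom
  have "inv s 0 < n" using permutes_in_image[OF permutes_inv[OF s]] n by simp
  moreover have "s (inv s 0) = 0" using permutes_inverses[OF s] by simp
  ultimately show ?thesis using Bottom by auto
next
  case Right
  have "s (n - 1) < n" using permutes_in_image[OF s] n by simp
  then show ?thesis using Right n by auto
next
  case Left
  have "s 0 < n" using permutes_in_image[OF s] n by simp
  then show ?thesis using Left n by auto
qed

lemma side_all:
  assumes s: "s permutes {..<n}" and n: "0 < n" and st: "st permutes {..<k}"
  shows "submatrix (ext_mat d (k, st)) (perm_mat (n, s)) \<longleftrightarrow> pattern_le (k, st) (del (n, s) (mcol d (n, s)))"
proof -
  have ml: "mcol d (n, s) < n" using mcol_props[OF s n] by blast
  have de: "pattern_le (k, st) (del (n, s) (mcol d (n, s))) \<longleftrightarrow> (\<exists>f g. emb k n st s f g \<and> (\<forall>j<k. g j \<noteq> mcol d (n, s)))"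
    by (rule del_emb[OF s st ml])
  show ?thesis
  proof (cases d)
    case Top
    have "s (mcol d (n, s)) = n - 1" using Top permutes_inverses[OF s] by simp
    then show ?thesis using side_top[OF s st ml] de Top by simp
  next
    case Bottom
    have "s (mcol d (n, s)) = 0" using Bottom permutes_inverses[OF s] by simp
    then show ?thesis using side_bottom[OF s st ml] de Bottom by simp
  next
    case Right
    then show ?thesis using side_right[OF s st _ n] de by simp
  next
    case Left
    then show ?thesis using side_left[OF s st _ n] de by simp
  qed
qed

lemma mcol_ins:
  assumes t: "t permutes {..<n'}" and T: "(m, r) \<in> T d (Suc n')"
  shows "mcol d (ins m r (n', t)) = m \<and> snd (ins m r (n', t)) m = r"
proof -
  define s where "s = (\<lambda>j. if j < Suc n' then (if j = m then r else ic r (t (dc m j))) else j)"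
  have d: "ins m r (n', t) = (Suc n', s)" unfolding ins_def s_def fst_conv snd_conv by (rule refl)
  have mr: "m < Suc n'" "r < Suc n'" using T by (cases d, auto)+
  have sp: "s permutes {..<Suc n'}" using ins_perm[OF t mr] unfolding d is_perm_def by simp
  have sm: "s m = r" unfolding s_def using mr by simp
  have "mcol d (Suc n', s) = m"
  proof (cases d)
    case Top
    then have "r = n'" using T by auto
    then show ?thesis using Top permutes_inv_eq[OF sp] sm by simp
  next
    case Bottom
    then have "r = 0" using T by auto
    then show ?thesis using Bottom permutes_inv_eq[OF sp] sm by simp
  next
    case Right
    then show ?thesis using T by auto
  next
    case Left
    then show ?thesis using T by auto
  qed
  then show ?thesis unfolding d using sm by simp
qed

theorem corollary2:
  fixes C :: "perm set" and d :: side and n :: nat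
  assumes "perm_class C"
    and "n \<ge> 1"
  shows "count_size (Av ((\<lambda>\<tau>. ext_mat d \<tau>) ` p_basis C)) n = n * count_size C (n - 1)"
proof -
  note C = assms(1)
  obtain n' where n: "n = Suc n'" using assms(2) by (cases n) auto
  define B where "B = {p. is_perm p \<and> fst p = n \<and> del p (mcol d p) \<in> C}"
  define Q where "Q = {q \<in> C. fst q = n - 1}"
  have A: "{p \<in> Av ((\<lambda>\<tau>. ext_mat d \<tau>) ` p_basis C). fst p = n} = B"
  proof (rule set_eqI)
    fix p :: perm
    obtain k s where p: "p = (k, s)" by (cases p)
    {
      assume pp: "is_perm p" and fp: "fst p = n"
      then have s: "s permutes {..<n}" and kn: "k = n" unfolding p is_perm_def by auto
      have np: "0 < n" using n by simp
      have qp: "is_perm (del (n, s) (mcol d (n, s)))" using del_perm[OF s] mcol_props[OF s np] by blast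
      have "(\<exists>A\<in>(\<lambda>\<tau>. ext_mat d \<tau>) ` p_basis C. submatrix A (perm_mat p))
         \<longleftrightarrow> (\<exists>\<tau>\<in>p_basis C. pattern_le \<tau> (del (n, s) (mcol d (n, s))))"
      proof
        assume "\<exists>A\<in>(\<lambda>\<tau>. ext_mat d \<tau>) ` p_basis C. submatrix A (perm_mat p)"
        then obtain \<tau> where ta: "\<tau> \<in> p_basis C" "submatrix (ext_mat d \<tau>) (perm_mat p)" by blast
        obtain k' st where tau: "\<tau> = (k', st)" by (cases \<tau>)
        have st: "st permutes {..<k'}" using ta(1) unfolding tau p_basis_def is_perm_def by auto
        show "\<exists>\<tau>\<in>p_basis C. pattern_le \<tau> (del (n, s) (mcol d (n, s)))"
          using ta side_all[OF s np st, of d] unfolding tau p kn by blast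
      next
        assume "\<exists>\<tau>\<in>p_basis C. pattern_le \<tau> (del (n, s) (mcol d (n, s)))"
        then obtain \<tau> where ta: "\<tau> \<in> p_basis C" "pattern_le \<tau> (del (n, s) (mcol d (n, s)))" by blast
        obtain k' st where tau: "\<tau> = (k', st)" by (cases \<tau>)
        have st: "st permutes {..<k'}" using ta(1) unfolding tau p_basis_def is_perm_def by auto
        show "\<exists>A\<in>(\<lambda>\<tau>. ext_mat d \<tau>) ` p_basis C. submatrix A (perm_mat p)"
          using ta side_all[OF s np st, of d] unfolding tau p kn by blast
      qed
      also have "\<dots> \<longleftrightarrow> del (n, s) (mcol d (n, s)) \<notin> C" using basis_char[OF C qp] by blast
      finally have "(p \<in> Av ((\<lambda>\<tau>. ext_mat d \<tau>) ` p_basis C)) \<longleftrightarrow> del p (mcol d p) \<in> C"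
        unfolding Av_def using pp unfolding p kn by auto
    } note key = this
    show "p \<in> {p \<in> Av ((\<lambda>\<tau>. ext_mat d \<tau>) ` p_basis C). fst p = n} \<longleftrightarrow> p \<in> B"
      using key unfolding B_def Av_def by auto
  qed
  define \<Phi> where "\<Phi> = (\<lambda>p. ((mcol d p, snd p (mcol d p)), del p (mcol d p)))"
  have inj: "inj_on \<Phi> B"
  proof (rule inj_onI)
    fix p1 p2 assume h: "p1 \<in> B" "p2 \<in> B" "\<Phi> p1 = \<Phi> p2"
    obtain k1 s1 where p1: "p1 = (k1, s1)" by (cases p1)
    obtain k2 s2 where p2: "p2 = (k2, s2)" by (cases p2)
    have s1: "s1 permutes {..<n}" "k1 = n" and s2: "s2 permutes {..<n}" "k2 = n"
      using h unfolding B_def p1 p2 is_perm_def by auto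
    have np: "0 < n" using n by simp
    have "ins (mcol d p1) (s1 (mcol d p1)) (del p1 (mcol d p1)) = p1"
      using ins_del[OF s1(1)] mcol_props[OF s1(1) np] unfolding p1 s1(2) by blast
    moreover have "ins (mcol d p2) (s2 (mcol d p2)) (del p2 (mcol d p2)) = p2"
      using ins_del[OF s2(1)] mcol_props[OF s2(1) np] unfolding p2 s2(2) by blast
    ultimately have e1: "p1 = ins (fst (fst (\<Phi> p1))) (snd (fst (\<Phi> p1))) (snd (\<Phi> p1))"
      and e2: "p2 = ins (fst (fst (\<Phi> p2))) (snd (fst (\<Phi> p2))) (snd (\<Phi> p2))"
      unfolding \<Phi>_def p1 p2 by simp_all
    show "p1 = p2" using e1 e2 h(3) by metis
  qed
  have img: "\<Phi> ` B = T d n \<times> Q"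
  proof (intro set_eqI iffI)
    fix x assume "x \<in> \<Phi> ` B"
    then obtain p where pB: "p \<in> B" and x: "x = \<Phi> p" by blast
    obtain k s where p: "p = (k, s)" by (cases p)
    have s: "s permutes {..<n}" "k = n" using pB unfolding B_def p is_perm_def by auto
    have np: "0 < n" using n by simp
    show "x \<in> T d n \<times> Q"
      using mcol_props[OF s(1) np, of d] pB unfolding x \<Phi>_def B_def Q_def p s(2) del_def by auto
  next
    fix x assume x: "x \<in> T d n \<times> Q"
    then obtain m r q where xe: "x = ((m, r), q)" and mr: "(m, r) \<in> T d n" and q: "q \<in> C" "fst q = n - 1"
      unfolding Q_def by auto
    obtain k t where qe: "q = (k, t)" by (cases q)
    have kn: "k = n'" using q n unfolding qe by simp
    have t: "t permutes {..<n'}" using q C kn unfolding perm_class_def qe is_perm_def by auto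
    have mr': "(m, r) \<in> T d (Suc n')" using mr n by simp
    have mlt: "m < Suc n'" "r < Suc n'" using mr' by (cases d, auto)+
    define p where "p = ins m r (n', t)"
    have pp: "is_perm p" unfolding p_def by (rule ins_perm[OF t mlt])
    have fp: "fst p = n" unfolding p_def ins_def n by simp
    have mc: "mcol d p = m" "snd p m = r" using mcol_ins[OF t mr'] unfolding p_def by auto
    have dp: "del p m = q" unfolding p_def qe kn by (rule del_ins[OF t mlt(1)])
    have "p \<in> B" unfolding B_def using pp fp mc dp q by auto
    moreover have "\<Phi> p = x" unfolding \<Phi>_def xe using mc dp by simp
    ultimately show "x \<in> \<Phi> ` B" by blast
  qed
  have "count_size (Av ((\<lambda>\<tau>. ext_mat d \<tau>) ` p_basis C)) n = card B"
    unfolding count_size_def A ..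
  also have "\<dots> = card (\<Phi> ` B)" using card_image[OF inj] by simp
  also have "\<dots> = n * card Q" unfolding img card_cartesian_product card_T ..
  also have "\<dots> = n * count_size C (n - 1)" unfolding Q_def count_size_def ..
  finally show ?thesis .
qed

end
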